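(* Let $K,T\subset\mathbb{R}^n$ be convex bodies with $T$ strictly convex and smooth. Let $q=(q_1,\dots,q_m)$ be a closed $(K,T)$-Minkowski billiard trajectory with closed dual billiard trajectory $p=(p_1,\dots,p_m)$ in $T$. Then $p$ is a closed polygonal curve (satisfying $p_j\neq p_{j+1}$ and $p_j\notin[p_{j-1},p_{j+1}]$ for all $j$) and is a closed $(T,-K)$-Minkowski billiard trajectory having $-q^{+1}:=(-q_2,\dots,-q_m,-q_1)$ as a closed dual billiard trajectory on $-K$.
   Context: A convex body is a compact convex set in $\mathbb{R}^n$ containing the origin in its interior; it is smooth if through each boundary point there is a unique supporting hyperplane. For a convex set $C$ and $z\in\partial C$, $N_C(z)=\{v:\langle v,y-z\rangle\le 0\ \forall y\in C\}$. A closed polygonal curve $(q_1,\dots,q_m)$, $m\ge2$, always satisfies $q_j\ne q_{j+1}$ and $q_j\notin[q_{j-1},q_{j+1}]$ (indices mod $m$). For convex bodies $A,B$, a closed polygonal curve $q$ with vertices on $\partial A$ is a closed $(A,B)$-Minkowski billiard trajectory if there are $p_1,\dots,p_m\in\partial B$ with $q_{j+1}-q_j\in N_B(p_j)$ and $p_{j+1}-p_j\in -N_A(q_{j+1})$ for all $j$; $p=(p_1,\dots,p_m)$ is called a closed dual billiard trajectory in $B$. *)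

theory Defs
  imports "HOL-Analysis.Analysis"
begin

definition convex_body :: "'a::euclidean_space set \<Rightarrow> bool" where
  "convex_body C \<longleftrightarrow> compact C \<and> convex C \<and> 0 \<in> interior C"

definition normal_cone :: "'a::euclidean_space set \<Rightarrow> 'a \<Rightarrow> 'a set" where
  "normal_cone C z = {v. \<forall>y\<in>C. inner v (y - z) \<le> 0}"

definition supporting_hyperplane :: "'a::euclidean_space set \<Rightarrow> 'a \<Rightarrow> 'a set \<Rightarrow> bool" where
  "supporting_hyperplane C z H \<longleftrightarrow>
     (\<exists>v c. v \<noteq> 0 \<and> H = {x. inner v x = c} \<and> inner v z = c \<and> (\<forall>y\<in>C. inner v y \<le> c))"

definition smooth_body :: "'a::euclidean_space set \<Rightarrow> bool" where
  "smooth_body C \<longleftrightarrow> (\<forall>z\<in>frontier C. \<exists>!H. supporting_hyperplane C z H)"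

definition strictly_convex :: "'a::euclidean_space set \<Rightarrow> bool" where
  "strictly_convex C \<longleftrightarrow> convex C \<and>
     (\<forall>x\<in>C. \<forall>y\<in>C. \<forall>t::real. x \<noteq> y \<and> 0 < t \<and> t < 1 \<longrightarrow> (1 - t) *\<^sub>R x + t *\<^sub>R y \<in> interior C)"

definition closed_polygonal :: "nat \<Rightarrow> (nat \<Rightarrow> 'a::euclidean_space) \<Rightarrow> bool" where
  "closed_polygonal m q \<longleftrightarrow> 2 \<le> m \<and>
     (\<forall>j<m. q j \<noteq> q ((j + 1) mod m) \<and>
            q j \<notin> closed_segment (q ((j + m - 1) mod m)) (q ((j + 1) mod m)))"

definition minkowski_billiard ::
  "'a::euclidean_space set \<Rightarrow> 'a set \<Rightarrow> nat \<Rightarrow> (nat \<Rightarrow> 'a) \<Rightarrow> (nat \<Rightarrow> 'a) \<Rightarrow> bool" where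
  "minkowski_billiard A B m q p \<longleftrightarrow> closed_polygonal m q \<and>
     (\<forall>j<m. q j \<in> frontier A \<and> p j \<in> frontier B \<and>
        q ((j + 1) mod m) - q j \<in> normal_cone B (p j) \<and>
        p ((j + 1) mod m) - p j \<in> uminus ` normal_cone A (q ((j + 1) mod m)))"

end

theory Submission
  imports Defs
begin

lemma frontier_neg:
  fixes K :: "'a::euclidean_space set"
  assumes "z \<in> frontier K" shows "- z \<in> frontier (uminus ` K)"
proof -
  have l: "linear (uminus :: 'a \<Rightarrow> 'a)" by (simp add: linear_uminus)
  have i: "inj (uminus :: 'a \<Rightarrow> 'a)" by (simp add: inj_def)
  have c: "closure (uminus ` K) = uminus ` closure K"
    using closure_injective_linear_image[OF l i] by simp
  have n: "interior (uminus ` K) = uminus ` interior K"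
    using interior_injective_linear_image[OF l i] by simp
  show ?thesis using assms unfolding frontier_def c n by (auto simp: image_iff)
qed

lemma normal_neg:
  assumes "v \<in> uminus ` normal_cone K z"
  shows "v \<in> normal_cone (uminus ` K) (- z)"
proof -
  obtain w where w: "v = - w" "w \<in> normal_cone K z" using assms by auto
  show ?thesis using w unfolding normal_cone_def
    by (auto simp: inner_diff_right)
qed

lemma normal_ray:
  fixes T :: "'a::euclidean_space set"
  assumes cb: "convex_body T" and sm: "smooth_body T" and z: "z \<in> frontier T"
    and u: "u \<in> normal_cone T z" and w: "w \<in> normal_cone T z" and u0: "u \<noteq> 0" and w0: "w \<noteq> 0"
  shows "\<exists>l>0. u = l *\<^sub>R w"
proof -
  have sup: "supporting_hyperplane T z {x. inner v x = inner v z}"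
    if "v \<in> normal_cone T z" "v \<noteq> 0" for v
    using that unfolding supporting_hyperplane_def normal_cone_def
    by (intro exI[of _ v] exI[of _ "inner v z"]) (auto simp: inner_diff_right)
  have eq: "{x. inner u x = inner u z} = {x. inner w x = inner w z}"
    using sm z sup[OF u u0] sup[OF w w0] unfolding smooth_body_def by blast
  have perp: "inner u y = 0" if "inner w y = 0" for y
  proof -
    have "z + y \<in> {x. inner w x = inner w z}" using that by (simp add: inner_add_right)
    then have "z + y \<in> {x. inner u x = inner u z}" using eq by simp
    then show ?thesis by (simp add: inner_add_right)
  qed
  define l where "l = inner u w / inner w w"
  define d where "d = u - l *\<^sub>R w"
  have ww: "inner w w \<noteq> 0" using w0 by simp
  have "inner w d = 0" unfolding d_def l_def using ww
    by (simp add: inner_diff_right inner_commute)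
  then have "inner u d = 0" by (rule perp)
  moreover have "inner d d = inner u d - l * inner w d"
    by (simp add: d_def inner_diff_left)
  ultimately have "inner d d = 0" using \<open>inner w d = 0\<close> by simp
  then have ul: "u = l *\<^sub>R w" unfolding d_def by simp
  have "l \<noteq> 0" using ul u0 by auto
  moreover have "\<not> l < 0"
  proof
    assume ln: "l < 0"
    obtain e where e: "e > 0" "ball 0 e \<subseteq> T"
      using cb unfolding convex_body_def by (meson mem_interior)
    define y where "y = (e / 2 / norm w) *\<^sub>R w"
    have ny: "norm y < e" using e w0 unfolding y_def by simp
    have yT: "y \<in> T" "- y \<in> T" using ny e by auto
    have key: "inner w (x - z) = 0" if "x \<in> T" for x
    proof -
      have a: "inner w (x - z) \<le> 0" using w that unfolding normal_cone_def by auto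
      have "inner u (x - z) \<le> 0" using u that unfolding normal_cone_def by auto
      then have "l * inner w (x - z) \<le> 0" using ul by simp
      then have "inner w (x - z) \<ge> 0" using ln by (simp add: mult_le_0_iff)
      then show ?thesis using a by simp
    qed
    have "inner w y = inner w z" using key[OF yT(1)] by (simp add: inner_diff_right)
    moreover have "inner w (- y) = inner w z" using key[OF yT(2)] by (simp add: inner_diff_right)
    ultimately have "inner w y = 0" by simp
    moreover have "inner w y = e / 2 * norm w" unfolding y_def using w0
      by (simp add: power2_norm_eq_inner[symmetric] power2_eq_square)
    ultimately show False using e w0 by simp
  qed
  ultimately show ?thesis using ul by (intro exI[of _ l]) auto
qed

lemma idx_prev: "j < (m::nat) \<Longrightarrow> ((j + 1) mod m + m - 1) mod m = j"
proof -
  assume j: "j < m"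
  show ?thesis
  proof (cases "j + 1 < m")
    case True then show ?thesis by simp
  next
    case False then have "j + 1 = m" using j by simp
    then show ?thesis using j by simp
  qed
qed

theorem proposition3p5:
  fixes K T :: "'a::euclidean_space set"
    and q p :: "nat \<Rightarrow> 'a" and m :: nat
  assumes "convex_body K" and "convex_body T"
    and "strictly_convex T" and "smooth_body T"
    and "minkowski_billiard K T m q p"
  shows "closed_polygonal m p \<and>
         minkowski_billiard T (uminus ` K) m p (\<lambda>j. - q ((j + 1) mod m))"
proof -
  have cq: "closed_polygonal m q" and mb: "\<And>j. j < m \<Longrightarrow> q j \<in> frontier K \<and> p j \<in> frontier T \<and>
        q ((j + 1) mod m) - q j \<in> normal_cone T (p j) \<and>
        p ((j + 1) mod m) - p j \<in> uminus ` normal_cone K (q ((j + 1) mod m))"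
    using assms(5) unfolding minkowski_billiard_def by auto
  have m2: "2 \<le> m" and cq2: "\<And>j. j < m \<Longrightarrow> q j \<noteq> q ((j + 1) mod m) \<and>
            q j \<notin> closed_segment (q ((j + m - 1) mod m)) (q ((j + 1) mod m))"
    using cq unfolding closed_polygonal_def by auto
  have dist: "p j \<noteq> p ((j + 1) mod m)" if j: "j < m" for j
  proof
    assume pe: "p j = p ((j + 1) mod m)"
    define j' where "j' = (j + 1) mod m"
    have j': "j' < m" unfolding j'_def using j by simp
    define a where "a = q j' - q j"
    define b where "b = q ((j' + 1) mod m) - q j'"
    have aN: "a \<in> normal_cone T (p j)" using mb[OF j] unfolding a_def j'_def by simp
    have bN: "b \<in> normal_cone T (p j)" using mb[OF j'] pe unfolding b_def j'_def by simp
    have a0: "a \<noteq> 0" using cq2[OF j] unfolding a_def j'_def by (metis eq_iff_diff_eq_0)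
    have b0: "b \<noteq> 0" using cq2[OF j'] unfolding b_def by (metis eq_iff_diff_eq_0)
    obtain l where l: "l > 0" "b = l *\<^sub>R a"
      using normal_ray[OF assms(2) assms(4) _ bN aN b0 a0] mb[OF j] by auto
    have "q j' = (1 / (1 + l)) *\<^sub>R q ((j' + 1) mod m) + (l / (1 + l)) *\<^sub>R q j"
    proof -
      have "q ((j' + 1) mod m) = (1 + l) *\<^sub>R q j' - l *\<^sub>R q j"
        using l(2) unfolding a_def b_def by (simp add: algebra_simps)
      then have e: "(1 + l) *\<^sub>R q j' = l *\<^sub>R q j + q ((j' + 1) mod m)"
        by (simp add: algebra_simps)
      have "q j' = (1 / (1 + l)) *\<^sub>R ((1 + l) *\<^sub>R q j')" using l(1) by simp
      also have "\<dots> = (1 / (1 + l)) *\<^sub>R q ((j' + 1) mod m) + (l / (1 + l)) *\<^sub>R q j"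
        unfolding e by (simp add: scaleR_right_distrib)
      finally show ?thesis .
    qed
    then have "q j' \<in> closed_segment (q ((j' + 1) mod m)) (q j)"
    proof -
      have "1 - l / (1 + l) = 1 / (1 + l)" using l(1) by (simp add: field_simps)
      moreover have "l / (1 + l) \<le> 1" "0 \<le> l / (1 + l)" using l(1) by auto
      ultimately show ?thesis unfolding closed_segment_def
        using \<open>q j' = _\<close> by (intro CollectI exI[of _ "l / (1 + l)"]) simp
    qed
    then have "q j' \<in> closed_segment (q ((j' + m - 1) mod m)) (q ((j' + 1) mod m))"
      using idx_prev[OF j] unfolding j'_def by (simp add: closed_segment_commute)
    then show False using cq2[OF j'] by simp
  qed
  have cp: "closed_polygonal m p"
    unfolding closed_polygonal_def
  proof (intro conjI m2 allI impI)
    fix j assume j: "j < m"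
    show "p j \<noteq> p ((j + 1) mod m)" by (rule dist[OF j])
    define i where "i = (j + m - 1) mod m"
    have i: "i < m" unfolding i_def using m2 by simp
    have ij: "(i + 1) mod m = j"
    proof (cases "j = 0")
      case True then show ?thesis unfolding i_def using m2 by simp
    next
      case False
      then have "(j + m - 1) mod m = j - 1"
      proof -
        have e: "j + m - 1 = (j - 1) + m" using False by simp
        have "(j + m - 1) mod m = (j - 1 + m) mod m" by (simp only: e)
        also have "\<dots> = (j - 1) mod m" by (rule mod_add_self2)
        also have "\<dots> = j - 1" using j by simp
        finally show ?thesis .
      qed
      then show ?thesis unfolding i_def using False j by simp
    qed
    have d1: "p i \<noteq> p j" using dist[OF i] ij by simp
    have d2: "p j \<noteq> p ((j + 1) mod m)" by (rule dist[OF j])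
    have fr: "p j \<notin> interior T" using mb[OF j] unfolding frontier_def by simp
    have inT: "p i \<in> T" "p ((j + 1) mod m) \<in> T"
    proof -
      have cl: "closed T" using assms(2) unfolding convex_body_def by (simp add: compact_imp_closed)
      have j1: "(j + 1) mod m < m" using j by simp
      show "p i \<in> T" using mb[OF i] frontier_subset_closed[OF cl] by blast
      show "p ((j + 1) mod m) \<in> T" using mb[OF j1] frontier_subset_closed[OF cl] by blast
    qed
    show "p j \<notin> closed_segment (p ((j + m - 1) mod m)) (p ((j + 1) mod m))"
    proof
      assume "p j \<in> closed_segment (p ((j + m - 1) mod m)) (p ((j + 1) mod m))"
      then obtain t where t: "0 \<le> t" "t \<le> 1" "p j = (1 - t) *\<^sub>R p i + t *\<^sub>R p ((j + 1) mod m)"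
        unfolding closed_segment_def i_def by auto
      have "t \<noteq> 0" using t d1 by auto
      moreover have "t \<noteq> 1" using t d2 by auto
      moreover have "p i \<noteq> p ((j + 1) mod m)" using t d1 by auto
      ultimately have "p j \<in> interior T" using assms(3) inT t unfolding strictly_convex_def by auto
      then show False using fr by simp
    qed
  qed
  have "minkowski_billiard T (uminus ` K) m p (\<lambda>j. - q ((j + 1) mod m))"
    unfolding minkowski_billiard_def
  proof (intro conjI cp allI impI)
    fix j assume j: "j < m"
    define j' where "j' = (j + 1) mod m"
    have j': "j' < m" unfolding j'_def using j by simp
    show "p j \<in> frontier T" using mb[OF j] by simp
    show "- q ((j + 1) mod m) \<in> frontier (uminus ` K)"
      using frontier_neg mb[OF j'] unfolding j'_def by blast
    show "p ((j + 1) mod m) - p j \<in> normal_cone (uminus ` K) (- q ((j + 1) mod m))"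
      using normal_neg mb[OF j] by blast
    have "q ((j' + 1) mod m) - q j' \<in> normal_cone T (p j')" using mb[OF j'] by simp
    then have "- q ((j' + 1) mod m) - - q j' \<in> uminus ` normal_cone T (p j')"
      by (intro image_eqI[of _ _ "q ((j' + 1) mod m) - q j'"]) auto
    then show "- q (((j + 1) mod m + 1) mod m) - - q ((j + 1) mod m)
          \<in> uminus ` normal_cone T (p ((j + 1) mod m))" unfolding j'_def .
  qed
  with cp show ?thesis by simp
qed

end
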